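(* Let $G$ and $G'$ be finitely generated groups, and suppose that one of the following holds: (i) $G$ is a subgroup of $G'$; (ii) $G$ is a quotient of $G'$ (there is a surjective homomorphism $G'\to G$); (iii) $G'$ is the quotient of $G$ by a finite normal subgroup (there is a surjective homomorphism $G\to G'$ with finite kernel). If $G$ has exponential Nielsen growth, then $G'$ has exponential Nielsen growth.
   Context: For a group $G$, a generating $n$-tuple is $(g_1,\dots,g_n)\in G^n$ with $G=\langle g_1,\dots,g_n\rangle$. The product replacement graph $\Gamma_n(G)$ has vertices the generating $n$-tuples, with edges from $(g_1,\dots,g_n)$ to each tuple obtained by replacing $g_j$ by $g_jg_i^{\pm1}$ or $g_i^{\pm1}g_j$, for every ordered pair $i\neq j$. For $S\in\Gamma_n(G)$, $\Gamma_n(G,S)$ is the connected component of $\Gamma_n(G)$ containing $S$. A connected graph has exponential growth if for some vertex $v$ there is $\alpha>1$ such that the number of vertices at distance at most $r$ from $v$ is at least $\alpha^r$ for all sufficiently large $r$. $G$ has exponential Nielsen growth if $\Gamma_n(G,S)$ has exponential growth for some $n$ and some generating $n$-tuple $S$. *)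

theory Defs
  imports "HOL-Algebra.Algebra"
begin

definition fin_gen :: "('a, 'b) monoid_scheme \<Rightarrow> bool" where
  "fin_gen G \<longleftrightarrow> (\<exists>A. finite A \<and> A \<subseteq> carrier G \<and> generate G A = carrier G)"

definition gen_tuple :: "('a, 'b) monoid_scheme \<Rightarrow> nat \<Rightarrow> 'a list \<Rightarrow> bool" where
  "gen_tuple G n xs \<longleftrightarrow> length xs = n \<and> set xs \<subseteq> carrier G \<and> generate G (set xs) = carrier G"

definition pr_move :: "('a, 'b) monoid_scheme \<Rightarrow> nat \<Rightarrow> 'a list \<Rightarrow> 'a list \<Rightarrow> bool" where
  "pr_move G n xs ys \<longleftrightarrow> (\<exists>i<n. \<exists>j<n. i \<noteq> j \<and>
      (ys = xs[j := xs ! j \<otimes>\<^bsub>G\<^esub> xs ! i] \<or>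
       ys = xs[j := xs ! j \<otimes>\<^bsub>G\<^esub> inv\<^bsub>G\<^esub> (xs ! i)] \<or>
       ys = xs[j := xs ! i \<otimes>\<^bsub>G\<^esub> xs ! j] \<or>
       ys = xs[j := inv\<^bsub>G\<^esub> (xs ! i) \<otimes>\<^bsub>G\<^esub> xs ! j]))"

definition pr_edge :: "('a, 'b) monoid_scheme \<Rightarrow> nat \<Rightarrow> 'a list \<Rightarrow> 'a list \<Rightarrow> bool" where
  "pr_edge G n xs ys \<longleftrightarrow> gen_tuple G n xs \<and> gen_tuple G n ys \<and> pr_move G n xs ys"

definition pr_component :: "('a, 'b) monoid_scheme \<Rightarrow> nat \<Rightarrow> 'a list \<Rightarrow> 'a list set" where
  "pr_component G n S = {T. (pr_edge G n)\<^sup>*\<^sup>* S T}"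

definition pr_ball :: "('a, 'b) monoid_scheme \<Rightarrow> nat \<Rightarrow> 'a list \<Rightarrow> nat \<Rightarrow> 'a list set" where
  "pr_ball G n v r = {w. \<exists>k\<le>r. (pr_edge G n ^^ k) v w}"

definition pr_exp_growth :: "('a, 'b) monoid_scheme \<Rightarrow> nat \<Rightarrow> 'a list \<Rightarrow> bool" where
  "pr_exp_growth G n S \<longleftrightarrow> (\<exists>v \<in> pr_component G n S. \<exists>\<alpha>::real. \<alpha> > 1 \<and>
      (\<exists>R. \<forall>r\<ge>R. real (card (pr_ball G n v r)) \<ge> \<alpha> ^ r))"

definition exp_nielsen_growth :: "('a, 'b) monoid_scheme \<Rightarrow> bool" where
  "exp_nielsen_growth G \<longleftrightarrow> (\<exists>n S. gen_tuple G n S \<and> pr_exp_growth G n S)"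

end

theory Submission imports Defs begin


lemma relpowp_map:
  assumes "\<And>x y. R x y \<Longrightarrow> S (f x) (f y)"
  shows "(R ^^ k) x y \<Longrightarrow> (S ^^ k) (f x) (f y)"
proof (induction k arbitrary: y)
  case 0 then show ?case by simp
next
  case (Suc k)
  then obtain z where "(R ^^ k) x z" "R z y" by auto
  then show ?case using Suc.IH assms by auto
qed

definition nbrs :: "('a, 'b) monoid_scheme \<Rightarrow> nat \<Rightarrow> 'a list \<Rightarrow> 'a list set" where
  "nbrs G n xs = (\<Union>i<n. \<Union>j<n. {xs[j := xs ! j \<otimes>\<^bsub>G\<^esub> xs ! i], xs[j := xs ! j \<otimes>\<^bsub>G\<^esub> inv\<^bsub>G\<^esub> (xs ! i)],
       xs[j := xs ! i \<otimes>\<^bsub>G\<^esub> xs ! j], xs[j := inv\<^bsub>G\<^esub> (xs ! i) \<otimes>\<^bsub>G\<^esub> xs ! j]})"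

lemma nbrs_finite: "finite (nbrs G n xs)"
  unfolding nbrs_def by auto

lemma move_nbrs: "pr_move G n xs ys \<Longrightarrow> ys \<in> nbrs G n xs"
  unfolding pr_move_def nbrs_def by blast

lemma ball_Suc: "pr_ball G n v (Suc r) \<subseteq> pr_ball G n v r \<union> (\<Union>x\<in>pr_ball G n v r. nbrs G n x)"
proof
  fix w assume "w \<in> pr_ball G n v (Suc r)"
  then obtain k where k: "k \<le> Suc r" "(pr_edge G n ^^ k) v w" unfolding pr_ball_def by auto
  show "w \<in> pr_ball G n v r \<union> (\<Union>x\<in>pr_ball G n v r. nbrs G n x)"
  proof (cases "k \<le> r")
    case True then show ?thesis using k unfolding pr_ball_def by auto
  next
    case False
    then have "k = Suc r" using k by auto
    then obtain y where "(pr_edge G n ^^ r) v y" "pr_edge G n y w" using k by auto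
    then show ?thesis unfolding pr_ball_def pr_edge_def using move_nbrs by blast
  qed
qed

lemma ball_finite: "finite (pr_ball G n v r)"
proof (induction r)
  case 0
  have "pr_ball G n v 0 = {v}" unfolding pr_ball_def by auto
  then show ?case by simp
next
  case (Suc r)
  then show ?case using ball_Suc[of G n v r] nbrs_finite by (meson finite_UN_I finite_Un finite_subset)
qed

lemma rtranclp_gen: "(pr_edge G n)\<^sup>*\<^sup>* S v \<Longrightarrow> gen_tuple G n S \<Longrightarrow> gen_tuple G n v"
  by (induction rule: rtranclp_induct) (auto simp: pr_edge_def)

lemma ball_gen: "w \<in> pr_ball G n v r \<Longrightarrow> gen_tuple G n v \<Longrightarrow> gen_tuple G n w"
  unfolding pr_ball_def using rtranclp_gen relpowp_imp_rtranclp by fastforce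

lemma transfer:
  fixes C :: real
  assumes gu: "gen_tuple G' m u" and a: "\<alpha> > 1" and R: "\<forall>r\<ge>R. \<alpha> ^ r \<le> real (card (pr_ball G n v r))"
    and C: "C > 0" and le: "\<And>r. real (card (pr_ball G n v r)) \<le> C * real (card (pr_ball G' m u r))"
  shows "exp_nielsen_growth G'"
proof -
  define \<beta> where "\<beta> = sqrt \<alpha>"
  have b1: "\<beta> > 1" using a unfolding \<beta>_def by simp
  have b2: "\<beta> * \<beta> = \<alpha>" using a unfolding \<beta>_def by simp
  have bb: "\<beta> ^ r * \<beta> ^ r = \<alpha> ^ r" for r
    by (metis power_mult_distrib b2)
  obtain N where N: "C < \<beta> ^ N" using real_arch_pow[OF b1] by blast
  have "\<beta> ^ r \<le> real (card (pr_ball G' m u r))" if r: "r \<ge> max R N" for r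
  proof -
    let ?x = "real (card (pr_ball G' m u r))"
    have "\<beta> ^ N \<le> \<beta> ^ r" using b1 r by (intro power_increasing) auto
    then have Cb: "C < \<beta> ^ r" using N by linarith
    have "\<alpha> ^ r \<le> real (card (pr_ball G n v r))" using R r by simp
    then have "\<beta> ^ r * \<beta> ^ r \<le> C * ?x" using le[of r] bb[of r] by linarith
    also have "C * ?x \<le> \<beta> ^ r * ?x" using Cb by (intro mult_right_mono) auto
    finally have "\<beta> ^ r * \<beta> ^ r \<le> \<beta> ^ r * ?x" .
    moreover have "\<beta> ^ r > 0" using b1 by simp
    ultimately show ?thesis by simp
  qed
  moreover have "u \<in> pr_component G' m u" unfolding pr_component_def by auto
  ultimately show ?thesis unfolding exp_nielsen_growth_def pr_exp_growth_def using gu b1 by blast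
qed


lemma nth_carrier: "set xs \<subseteq> carrier A \<Longrightarrow> i < length xs \<Longrightarrow> xs ! i \<in> carrier A"
  by (meson nth_mem subsetD)

lemma move_hom:
  assumes h: "group_hom A B \<phi>" and c: "set xs \<subseteq> carrier A" and l: "length xs = n"
    and m: "pr_move A n xs ys"
  shows "pr_move B n (map \<phi> xs) (map \<phi> ys)"
proof -
  interpret group_hom A B \<phi> by (rule h)
  from m obtain i j where ij: "i < n" "j < n" "i \<noteq> j" and
    d: "ys = xs[j := xs ! j \<otimes>\<^bsub>A\<^esub> xs ! i] \<or>
       ys = xs[j := xs ! j \<otimes>\<^bsub>A\<^esub> inv\<^bsub>A\<^esub> (xs ! i)] \<or>
       ys = xs[j := xs ! i \<otimes>\<^bsub>A\<^esub> xs ! j] \<or>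
       ys = xs[j := inv\<^bsub>A\<^esub> (xs ! i) \<otimes>\<^bsub>A\<^esub> xs ! j]" unfolding pr_move_def by blast
  have ci: "xs ! i \<in> carrier A" and cj: "xs ! j \<in> carrier A" using nth_carrier[OF c] ij l by auto
  show ?thesis unfolding pr_move_def
    apply (rule exI[of _ i], rule conjI[OF ij(1)], rule exI[of _ j], rule conjI[OF ij(2)], rule conjI[OF ij(3)])
    using d ci cj ij l by (auto simp: map_update)
qed

lemma move_app:
  assumes "length xs = n" "pr_move A n xs ys"
  shows "pr_move A (n + m) (xs @ T) (ys @ T)"
proof -
  from assms(2) obtain i j where ij: "i < n" "j < n" "i \<noteq> j" and
    d: "ys = xs[j := xs ! j \<otimes>\<^bsub>A\<^esub> xs ! i] \<or>
       ys = xs[j := xs ! j \<otimes>\<^bsub>A\<^esub> inv\<^bsub>A\<^esub> (xs ! i)] \<or>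
       ys = xs[j := xs ! i \<otimes>\<^bsub>A\<^esub> xs ! j] \<or>
       ys = xs[j := inv\<^bsub>A\<^esub> (xs ! i) \<otimes>\<^bsub>A\<^esub> xs ! j]" unfolding pr_move_def by blast
  show ?thesis unfolding pr_move_def
  proof (intro exI conjI)
    show "i < n + m" "j < n + m" "i \<noteq> j" using ij by auto
    show "ys @ T = (xs @ T)[j := (xs @ T) ! j \<otimes>\<^bsub>A\<^esub> (xs @ T) ! i] \<or>
            ys @ T = (xs @ T)[j := (xs @ T) ! j \<otimes>\<^bsub>A\<^esub> inv\<^bsub>A\<^esub> (xs @ T) ! i] \<or>
            ys @ T = (xs @ T)[j := (xs @ T) ! i \<otimes>\<^bsub>A\<^esub> (xs @ T) ! j] \<or>
            ys @ T = (xs @ T)[j := inv\<^bsub>A\<^esub> (xs @ T) ! i \<otimes>\<^bsub>A\<^esub> (xs @ T) ! j]"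
      using d ij assms(1) by (auto simp: list_update_append1 nth_append)
  qed
qed

lemma move_lift:
  assumes h: "group_hom A B \<phi>" and c: "set w \<subseteq> carrier A" and l: "length w = n"
    and m: "pr_move B n (map \<phi> w) z"
  shows "\<exists>w'. set w' \<subseteq> carrier A \<and> length w' = n \<and> map \<phi> w' = z \<and> pr_move A n w w'"
proof -
  interpret group_hom A B \<phi> by (rule h)
  let ?xs = "map \<phi> w"
  from m obtain i j where ij: "i < n" "j < n" "i \<noteq> j" and
    d: "z = ?xs[j := ?xs ! j \<otimes>\<^bsub>B\<^esub> ?xs ! i] \<or>
       z = ?xs[j := ?xs ! j \<otimes>\<^bsub>B\<^esub> inv\<^bsub>B\<^esub> (?xs ! i)] \<or>
       z = ?xs[j := ?xs ! i \<otimes>\<^bsub>B\<^esub> ?xs ! j] \<or>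
       z = ?xs[j := inv\<^bsub>B\<^esub> (?xs ! i) \<otimes>\<^bsub>B\<^esub> ?xs ! j]" unfolding pr_move_def by blast
  have ci: "w ! i \<in> carrier A" and cj: "w ! j \<in> carrier A" using nth_carrier[OF c] ij l by auto
  have mv: "pr_move A n w w'" if "w' = w[j := w ! j \<otimes>\<^bsub>A\<^esub> w ! i] \<or>
       w' = w[j := w ! j \<otimes>\<^bsub>A\<^esub> inv\<^bsub>A\<^esub> (w ! i)] \<or>
       w' = w[j := w ! i \<otimes>\<^bsub>A\<^esub> w ! j] \<or>
       w' = w[j := inv\<^bsub>A\<^esub> (w ! i) \<otimes>\<^bsub>A\<^esub> w ! j]" for w'
    unfolding pr_move_def using ij that by blast
  have cs: "set (w[j := a]) \<subseteq> carrier A" if "a \<in> carrier A" for a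
    using c that set_update_subset_insert[of w j a] by blast
  from d show ?thesis
  proof (elim disjE)
    assume z: "z = ?xs[j := ?xs ! j \<otimes>\<^bsub>B\<^esub> ?xs ! i]"
    show ?thesis
      apply (rule exI[of _ "w[j := w ! j \<otimes>\<^bsub>A\<^esub> w ! i]"])
      using z mv cs ci cj ij l by (auto simp: map_update)
  next
    assume z: "z = ?xs[j := ?xs ! j \<otimes>\<^bsub>B\<^esub> inv\<^bsub>B\<^esub> (?xs ! i)]"
    show ?thesis
      apply (rule exI[of _ "w[j := w ! j \<otimes>\<^bsub>A\<^esub> inv\<^bsub>A\<^esub> (w ! i)]"])
      using z mv cs ci cj ij l by (auto simp: map_update)
  next
    assume z: "z = ?xs[j := ?xs ! i \<otimes>\<^bsub>B\<^esub> ?xs ! j]"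
    show ?thesis
      apply (rule exI[of _ "w[j := w ! i \<otimes>\<^bsub>A\<^esub> w ! j]"])
      using z mv cs ci cj ij l by (auto simp: map_update)
  next
    assume z: "z = ?xs[j := inv\<^bsub>B\<^esub> (?xs ! i) \<otimes>\<^bsub>B\<^esub> ?xs ! j]"
    show ?thesis
      apply (rule exI[of _ "w[j := inv\<^bsub>A\<^esub> (w ! i) \<otimes>\<^bsub>A\<^esub> w ! j]"])
      using z mv cs ci cj ij l by (auto simp: map_update)
  qed
qed

lemma gen_hom_surj:
  assumes h: "group_hom A B \<phi>" and s: "\<phi> ` carrier A = carrier B" and g: "gen_tuple A n xs"
  shows "gen_tuple B n (map \<phi> xs)"
proof -
  interpret group_hom A B \<phi> by (rule h)
  have c: "set xs \<subseteq> carrier A" using g unfolding gen_tuple_def by auto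
  have "generate B (set (map \<phi> xs)) = \<phi> ` generate A (set xs)"
    using generate_img[OF c] by simp
  also have "\<dots> = carrier B" using g s unfolding gen_tuple_def by simp
  finally show ?thesis using g c unfolding gen_tuple_def by auto
qed

lemma gen_app:
  assumes gr: "group B" and c: "set xs \<subseteq> carrier B" and g: "gen_tuple B m T"
  shows "gen_tuple B (length xs + m) (xs @ T)"
proof -
  interpret group B by (rule gr)
  have cT: "set T \<subseteq> carrier B" using g unfolding gen_tuple_def by auto
  have "carrier B = generate B (set T)" using g unfolding gen_tuple_def by auto
  also have "\<dots> \<subseteq> generate B (set (xs @ T))" by (rule mono_generate) auto
  finally have "carrier B \<subseteq> generate B (set (xs @ T))" .
  moreover have "generate B (set (xs @ T)) \<subseteq> carrier B" using c cT by (intro generate_incl) auto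
  ultimately show ?thesis using g c cT unfolding gen_tuple_def by auto
qed


lemma fiber_card:
  assumes h: "group_hom A B \<phi>" and fk: "finite (kernel A B \<phi>)"
  shows "finite {x \<in> carrier A. \<phi> x = z} \<and> card {x \<in> carrier A. \<phi> x = z} \<le> card (kernel A B \<phi>)"
proof (cases "{x \<in> carrier A. \<phi> x = z} = {}")
  case True then show ?thesis by (simp only: card.empty finite.emptyI) simp
next
  case False
  interpret group_hom A B \<phi> by (rule h)
  obtain x0 where x0: "x0 \<in> carrier A" "\<phi> x0 = z" using False by auto
  let ?f = "\<lambda>x. inv\<^bsub>A\<^esub> x0 \<otimes>\<^bsub>A\<^esub> x"
  have inj: "inj_on ?f {x \<in> carrier A. \<phi> x = z}"
    by (rule inj_onI) (use x0 in \<open>auto dest: G.l_cancel[rotated]\<close>)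
  have sub: "?f ` {x \<in> carrier A. \<phi> x = z} \<subseteq> kernel A B \<phi>"
    using x0 unfolding kernel_def by auto
  have "finite {x \<in> carrier A. \<phi> x = z}"
    using finite_imageD[OF finite_subset[OF sub fk] inj] .
  moreover have "card {x \<in> carrier A. \<phi> x = z} \<le> card (kernel A B \<phi>)"
    using card_inj_on_le[OF inj sub fk] .
  ultimately show ?thesis by simp
qed

lemma preimage_card:
  assumes h: "group_hom A B \<phi>" and fk: "finite (kernel A B \<phi>)" and l: "length y = n"
  shows "finite {x \<in> carrier A. \<phi> x \<in> set y} \<and> card {x \<in> carrier A. \<phi> x \<in> set y} \<le> n * card (kernel A B \<phi>)"
proof -
  let ?K = "card (kernel A B \<phi>)"
  have eq: "{x \<in> carrier A. \<phi> x \<in> set y} = (\<Union>z\<in>set y. {x \<in> carrier A. \<phi> x = z})" by auto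
  have "card (\<Union>z\<in>set y. {x \<in> carrier A. \<phi> x = z}) \<le> (\<Sum>z\<in>set y. card {x \<in> carrier A. \<phi> x = z})"
    by (rule card_UN_le) simp
  also have "\<dots> \<le> (\<Sum>z\<in>set y. ?K)" by (rule sum_mono) (use fiber_card[OF h fk] in blast)
  also have "\<dots> = card (set y) * ?K" by simp
  also have "\<dots> \<le> n * ?K" using card_length[of y] l by simp
  finally show ?thesis using eq fiber_card[OF h fk] by auto
qed

theorem proposition3p7:
  fixes G :: "('a, 'b) monoid_scheme" and G' :: "('c, 'd) monoid_scheme"
  assumes "group G" and "group G'"
    and "fin_gen G" and "fin_gen G'"
    and "(\<exists>h. h \<in> hom G G' \<and> inj_on h (carrier G))
       \<or> (\<exists>h. h \<in> hom G' G \<and> h ` carrier G' = carrier G)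
       \<or> (\<exists>h. h \<in> hom G G' \<and> h ` carrier G = carrier G' \<and> finite (kernel G G' h))"
    and "exp_nielsen_growth G"
  shows "exp_nielsen_growth G'"
proof -
  obtain n S v \<alpha> R where gS: "gen_tuple G n S" and vc: "v \<in> pr_component G n S" and a: "\<alpha> > 1"
    and R: "\<forall>r\<ge>R. \<alpha> ^ r \<le> real (card (pr_ball G n v r))"
    using assms(6) unfolding exp_nielsen_growth_def pr_exp_growth_def by blast
  have gv: "gen_tuple G n v" using rtranclp_gen vc gS unfolding pr_component_def by blast
  have bc: "set w \<subseteq> carrier G \<and> length w = n" if "w \<in> pr_ball G n v r" for w r
    using ball_gen[OF that gv] unfolding gen_tuple_def by auto
  obtain T where gT: "gen_tuple G' (length T) T"
  proof -
    obtain A where "finite A" "A \<subseteq> carrier G'" "generate G' A = carrier G'"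
      using assms(4) unfolding fin_gen_def by blast
    moreover obtain T where "set T = A" using finite_list[OF \<open>finite A\<close>] by blast
    ultimately show ?thesis using that unfolding gen_tuple_def by auto
  qed
  define m where "m = length T"
  have gT': "gen_tuple G' m T" using gT m_def by simp
  from assms(5) show ?thesis
  proof (elim disjE exE conjE)
    fix h assume hh: "h \<in> hom G G'" and inj: "inj_on h (carrier G)"
    have gh: "group_hom G G' h" by (rule group_hom.intro[OF assms(1) assms(2) group_hom_axioms.intro[OF hh]])
    define f where "f w = map h w @ T" for w
    have cm: "set (map h w) \<subseteq> carrier G'" if "set w \<subseteq> carrier G" for w
      using that hh by (auto simp: hom_def)
    have gf: "gen_tuple G' (n + m) (f w)" if "gen_tuple G n w" for w
      using gen_app[OF assms(2) cm gT'] that unfolding f_def gen_tuple_def by auto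
    have edge: "pr_edge G' (n + m) (f x) (f y)" if "pr_edge G n x y" for x y
    proof -
      have "pr_move G' n (map h x) (map h y)"
        using move_hom[OF gh] that unfolding pr_edge_def gen_tuple_def by blast
      then have "pr_move G' (n + m) (f x) (f y)" unfolding f_def
        by (intro move_app) (use that in \<open>auto simp: pr_edge_def gen_tuple_def\<close>)
      then show ?thesis using gf that unfolding pr_edge_def by auto
    qed
    have sub: "f ` pr_ball G n v r \<subseteq> pr_ball G' (n + m) (f v) r" for r
      unfolding pr_ball_def using relpowp_map[of "pr_edge G n" "pr_edge G' (n + m)" f, OF edge] by blast
    have injf: "inj_on f (pr_ball G n v r)" for r
    proof (rule inj_onI)
      fix x y assume x: "x \<in> pr_ball G n v r" and y: "y \<in> pr_ball G n v r" and e: "f x = f y"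
      then have e2: "map h x = map h y" unfolding f_def by simp
      show "x = y"
      proof (rule nth_equalityI)
        show "length x = length y" using bc x y by auto
        fix i assume "i < length x"
        then have "h (x ! i) = h (y ! i)" "x ! i \<in> carrier G" "y ! i \<in> carrier G"
          using e2 bc[OF x] bc[OF y] nth_carrier by (metis nth_map, blast, metis)
        then show "x ! i = y ! i" using inj inj_onD by metis
      qed
    qed
    show ?thesis
    proof (rule transfer[OF gf[OF gv] a R])
      show "(1::real) > 0" by simp
      fix r
      have "card (pr_ball G n v r) = card (f ` pr_ball G n v r)" using card_image[OF injf] by simp
      also have "\<dots> \<le> card (pr_ball G' (n + m) (f v) r)" by (rule card_mono[OF ball_finite sub])
      finally show "real (card (pr_ball G n v r)) \<le> 1 * real (card (pr_ball G' (n + m) (f v) r))" by simp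
    qed
  next
    fix h assume hh: "h \<in> hom G' G" and surj: "h ` carrier G' = carrier G"
    have gh: "group_hom G' G h" by (rule group_hom.intro[OF assms(2) assms(1) group_hom_axioms.intro[OF hh]])
    have ex: "\<forall>x\<in>carrier G. \<exists>y. y \<in> carrier G' \<and> h y = x"
    proof
      fix x assume "x \<in> carrier G"
      then have "x \<in> h ` carrier G'" by (simp only: surj)
      then obtain y where "y \<in> carrier G'" "x = h y" by (rule imageE)
      then show "\<exists>y. y \<in> carrier G' \<and> h y = x" by auto
    qed
    obtain lift where lift0: "\<forall>x\<in>carrier G. lift x \<in> carrier G' \<and> h (lift x) = x"
      using bchoice[OF ex] by blast
    have lift: "lift x \<in> carrier G' \<and> h (lift x) = x" if "x \<in> carrier G" for x
      using lift0 that by blast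
    define vt where "vt = map lift v"
    have vt: "set vt \<subseteq> carrier G' \<and> length vt = n \<and> map h vt = v"
      using gv lift unfolding vt_def gen_tuple_def by (auto intro!: map_idI simp: subset_iff)
    have gl: "gen_tuple G' (n + m) (w @ T)" if "set w \<subseteq> carrier G'" "length w = n" for w
      using gen_app[OF assms(2) that(1) gT'] that(2) by simp
    have claim: "\<exists>w. set w \<subseteq> carrier G' \<and> length w = n \<and> map h w = y \<and>
        (pr_edge G' (n + m) ^^ k) (vt @ T) (w @ T)" if "(pr_edge G n ^^ k) v y" for k y
      using that
    proof (induction k arbitrary: y)
      case 0 then show ?case using vt by auto
    next
      case (Suc k)
      then obtain y0 where y0: "(pr_edge G n ^^ k) v y0" "pr_edge G n y0 y" by auto
      then obtain w where w: "set w \<subseteq> carrier G'" "length w = n" "map h w = y0"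
        "(pr_edge G' (n + m) ^^ k) (vt @ T) (w @ T)" using Suc.IH by blast
      have "pr_move G n (map h w) y" using y0(2) w(3) unfolding pr_edge_def by simp
      then obtain w' where w': "set w' \<subseteq> carrier G'" "length w' = n" "map h w' = y" "pr_move G' n w w'"
        using move_lift[OF gh w(1,2)] by blast
      have "pr_edge G' (n + m) (w @ T) (w' @ T)"
        unfolding pr_edge_def using gl[OF w(1,2)] gl[OF w'(1,2)] move_app[OF w(2) w'(4)] by blast
      then show ?case using w w' by auto
    qed
    have sub: "pr_ball G n v r \<subseteq> (\<lambda>w. map h (take n w)) ` pr_ball G' (n + m) (vt @ T) r" for r
    proof
      fix y assume "y \<in> pr_ball G n v r"
      then obtain k where k: "k \<le> r" "(pr_edge G n ^^ k) v y" unfolding pr_ball_def by auto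
      then obtain w where w: "set w \<subseteq> carrier G'" "length w = n" "map h w = y"
        "(pr_edge G' (n + m) ^^ k) (vt @ T) (w @ T)" using claim by blast
      then have "w @ T \<in> pr_ball G' (n + m) (vt @ T) r" unfolding pr_ball_def using k by auto
      moreover have "y = map h (take n (w @ T))" using w by simp
      ultimately show "y \<in> (\<lambda>w. map h (take n w)) ` pr_ball G' (n + m) (vt @ T) r" by blast
    qed
    show ?thesis
    proof (rule transfer[OF gl[of vt] a R])
      show "set vt \<subseteq> carrier G'" "length vt = n" using vt by auto
      show "(1::real) > 0" by simp
      fix r
      have "card (pr_ball G n v r) \<le> card ((\<lambda>w. map h (take n w)) ` pr_ball G' (n + m) (vt @ T) r)"
        by (rule card_mono[OF finite_imageI[OF ball_finite] sub])
      also have "\<dots> \<le> card (pr_ball G' (n + m) (vt @ T) r)" by (rule card_image_le[OF ball_finite])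
      finally show "real (card (pr_ball G n v r)) \<le> 1 * real (card (pr_ball G' (n + m) (vt @ T) r))" by simp
    qed
  next
    fix h assume hh: "h \<in> hom G G'" and surj: "h ` carrier G = carrier G'" and fk: "finite (kernel G G' h)"
    have gh: "group_hom G G' h" by (rule group_hom.intro[OF assms(1) assms(2) group_hom_axioms.intro[OF hh]])
    let ?K = "card (kernel G G' h)"
    have edge: "pr_edge G' n (map h x) (map h y)" if "pr_edge G n x y" for x y
      using that gen_hom_surj[OF gh surj] move_hom[OF gh] unfolding pr_edge_def gen_tuple_def
      by (metis length_map)
    define Fib where "Fib y = {w. set w \<subseteq> {x \<in> carrier G. h x \<in> set y} \<and> length w = n}" for y
    have sub: "pr_ball G n v r \<subseteq> (\<Union>y\<in>pr_ball G' n (map h v) r. Fib y)" for r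
    proof
      fix w assume w: "w \<in> pr_ball G n v r"
      then have "map h w \<in> pr_ball G' n (map h v) r"
        unfolding pr_ball_def using relpowp_map[of "pr_edge G n" "pr_edge G' n" "map h", OF edge] by blast
      moreover have "w \<in> Fib (map h w)" using bc[OF w] unfolding Fib_def by auto
      ultimately show "w \<in> (\<Union>y\<in>pr_ball G' n (map h v) r. Fib y)" by blast
    qed
    have fib: "finite (Fib y) \<and> card (Fib y) \<le> (n * ?K) ^ n" if "y \<in> pr_ball G' n (map h v) r" for y r
    proof -
      have ly: "length y = n" using ball_gen[OF that gen_hom_surj[OF gh surj gv]] unfolding gen_tuple_def by auto
      note pc = preimage_card[OF gh fk ly]
      have "finite (Fib y)" unfolding Fib_def by (rule finite_lists_length_eq[OF conjunct1[OF pc]])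
      moreover have "card (Fib y) = card {x \<in> carrier G. h x \<in> set y} ^ n"
        unfolding Fib_def by (rule card_lists_length_eq[OF conjunct1[OF pc]])
      moreover have "card {x \<in> carrier G. h x \<in> set y} ^ n \<le> (n * ?K) ^ n"
        by (rule power_mono[OF conjunct2[OF pc]]) simp
      ultimately show ?thesis by simp
    qed
    show ?thesis
    proof (rule transfer[OF gen_hom_surj[OF gh surj gv] a R])
      show "real ((n * ?K) ^ n) + 1 > 0" using of_nat_0_le_iff[of "(n * ?K) ^ n"] by linarith
      fix r
      let ?B = "pr_ball G' n (map h v) r"
      have "card (pr_ball G n v r) \<le> card (\<Union>y\<in>?B. Fib y)"
        by (rule card_mono[OF _ sub]) (use fib ball_finite in blast)
      also have "\<dots> \<le> (\<Sum>y\<in>?B. card (Fib y))" by (rule card_UN_le[OF ball_finite])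
      also have "\<dots> \<le> (\<Sum>y\<in>?B. (n * ?K) ^ n)" by (rule sum_mono) (use fib in blast)
      also have "\<dots> = card ?B * (n * ?K) ^ n" by simp
      finally have "real (card (pr_ball G n v r)) \<le> real (card ?B) * real ((n * ?K) ^ n)"
        by (metis of_nat_le_iff of_nat_mult)
      also have "\<dots> \<le> (real ((n * ?K) ^ n) + 1) * real (card ?B)" by (simp add: algebra_simps)
      finally show "real (card (pr_ball G n v r)) \<le> (real ((n * ?K) ^ n) + 1) * real (card ?B)" .
    qed
  qed
qed

end
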